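(* Let $k\in\omega\setminus\{0,1\}$, let $A$ be a nontrivial closed class of decision tables from $\mathcal M_k^\infty$, $\psi$ a bounded complexity measure, $T\in A$, $n\in\omega$, and suppose $l_\psi(T,n)>0$. Then there exists a mapping $\nu:E_k^{W(T)}\to\mathcal P(\omega)$ such that the table $T^*=J(\nu,T)$ satisfies $\psi^a(T^* )\le n$ and $\psi^d(T^* )\ge\log_k l_\psi(T,n)$.
   Context: Notation: $\omega=\{0,1,2,\dots\}$; $\mathcal P(\omega)$ is the set of nonempty finite subsets of $\omega$; for $k\in\omega\setminus\{0,1\}$, $E_k=\{0,1,\dots,k-1\}$. $P=\{f_i:i\in\omega\}$ is a set of attributes, $f_i\neq f_j$ for $i\ne j$. Decision tables: $\mathcal M_k^\infty$ is the set of rectangular tables filled with numbers from $E_k$, whose columns are labeled with pairwise different attributes from $P$, whose rows are pairwise different, and each row of which is labeled with a set from $\mathcal P(\omega)$ (its set of decisions). The empty table (no rows) is denoted $\Lambda$ and belongs to $\mathcal M_k^\infty$. For $T\in\mathcal M_k^\infty$: $\Delta(T)$ is the set of rows; $\Pi(T)$ is the intersection of the decision sets of all rows (common decisions); $\mathrm{At}(T)$ is the set of attributes labeling columns; $W(T)=|\mathrm{At}(T)|$. For nonempty $T$, $\Omega_k(T)$ is the set of finite words (including the empty word $\lambda$) over the alphabet $\{(f_i,\delta):f_i\in\mathrm{At}(T),\delta\in E_k\}$; for $\alpha=(f_{i_1},\delta_1)\cdots(f_{i_m},\delta_m)$, $T\alpha$ is the subtable of $T$ consisting of the rows having value $\delta_j$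 in the column $f_{i_j}$ for all $j$, and $T\lambda=T$. Operations: for $D\subseteq\mathrm{At}(T)$, $I(D,T)$ is obtained from $T$ by deleting the columns labeled with attributes from $D$ and, in each group of rows coinciding on the remaining columns, keeping only the first row; $I(\mathrm{At}(T),T)=\Lambda$. For $\nu:E_k^{|\mathrm{At}(T)|}\to\mathcal P(\omega)$, $J(\nu,T)$ is obtained by replacing the decision set of each row $\bar\delta$ by $\nu(\bar\delta)$. $[T]=\{J(\nu,I(D,T)):D\subseteq\mathrm{At}(T),\ \nu:E_k^{|\mathrm{At}(T)\setminus D|}\to\mathcal P(\omega)\}$; for nonempty $A\subseteq\mathcal M_k^\infty$, $[A]=\bigcup_{T\in A}[T]$. $A$ is a closed class if $[A]=A$; nontrivial if it contains a nonempty table. Decision trees: a $k$-decision tree is a finite directed rooted tree with at least two nodes in which the root and the edges leaving the root are unlabeled, each terminal node is labeled with a decision from $\omega$, and each other node is labeled with an attribute from $P$, each edge leaving such a node being labeled with a number from $E_k$. $\mathrm{At}(\Gamma)$ is the set of attributes labeling nodes of $\Gamma$. For a complete path $\tau=v_1,d_1,\dots,v_m,d_m,v_{m+1}$ (from the root to a terminal node), $\pi(\tau)=\lambda$ if $m=1$, and otherwise $\pi(\tau)=(f_{i_2},\delta_2)\cdots(f_{i_m},\delta_m)$ where $v_j$ is labeled $f_{i_j}$ and $d_j$ is labeled $\delta_j$; $T(\tau)=T\pi(\tau)$. For $T\ne\Lambda$, a nondeterministic decision tree for $T$ is a $k$-decision tree $\Gamma$ with $\mathrm{At}(\Gamma)\subseteq\mathrm{At}(T)$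 such that every row of $T$ belongs to $T(\tau)$ for some complete path $\tau$, and for every complete path $\tau$ either $T(\tau)=\Lambda$ or the decision at the terminal node of $\tau$ belongs to $\Pi(T(\tau))$. A deterministic decision tree for $T$ is a nondeterministic decision tree for $T$ in which, additionally, exactly one edge leaves the root and the edges leaving any node that is neither the root nor terminal are labeled with pairwise different numbers. Complexity measures: a partially bounded complexity measure is a function $\psi:P^*\to\omega$ on finite words over $P$ such that for all words $\alpha_1,\alpha_2$: $\psi(\alpha_1)=0$ iff $\alpha_1=\lambda$; $\psi(\alpha_1)$ is invariant under permutation of letters; $\psi(\alpha_1)\le\psi(\alpha_1\alpha_2)$; $\psi(\alpha_1\alpha_2)\le\psi(\alpha_1)+\psi(\alpha_2)$. It is bounded if in addition $\psi(\alpha)\ge|\alpha|$ for all $\alpha$. $\psi$ is extended to words $(f_{i_1},\delta_1)\cdots(f_{i_m},\delta_m)$ by $\psi(f_{i_1}\cdots f_{i_m})$ ($\psi(\lambda)=0$). For a $k$-decision tree $\Gamma$, $\psi(\Gamma)=\max_\tau\psi(\pi(\tau))$ over complete paths. For $T\ne\Lambda$, $\psi^d(T)$ (resp. $\psi^a(T)$) is the minimum of $\psi(\Gamma)$ over deterministic (resp. nondeterministic) decision trees $\Gamma$ for $T$; $\psi^d(\Lambda)=\psi^a(\Lambda)=0$. Covers: for $T\ne\Lambda$ and $n\in\omega$, $\Omega_k^n(T)=\{\alpha\in\Omega_k(T):\psi(\alpha)\le n\}$. A finite set $U\subseteq\Omega_k^n(T)$ is a $(\psi,n)$-cover of $T$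 if $\bigcup_{\alpha\in U}\Delta(T\alpha)=\Delta(T)$; it is irreducible if no proper subset of $U$ is a $(\psi,n)$-cover of $T$. $l_\psi(T,n)$ is the maximum cardinality of an irreducible $(\psi,n)$-cover of $T$; $l_\psi(\Lambda,n)=0$. *)

theory Defs
  imports Complex_Main "HOL-Library.Multiset"
begin

text \<open>Attribute f_i is identified with the natural number i.\<close>

record dtable =
  atts :: "nat list"
  rows :: "(nat list \<times> nat set) list"

definition Lam :: dtable where
  "Lam = \<lparr>atts = [], rows = []\<rparr>"

text \<open>Membership in M_k^infinity. Nonempty tables have at least one column;
the only table without rows is Lam.\<close>
definition valid_table :: "nat \<Rightarrow> dtable \<Rightarrow> bool" where
  "valid_table k T \<longleftrightarrow>
     distinct (atts T) \<and> distinct (map fst (rows T)) \<and>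
     (\<forall>(r, d) \<in> set (rows T). length r = length (atts T) \<and> (\<forall>v\<in>set r. v < k)
        \<and> finite d \<and> d \<noteq> {}) \<and>
     (rows T = [] \<longleftrightarrow> atts T = [])"

definition Delta :: "dtable \<Rightarrow> (nat list \<times> nat set) set" where
  "Delta T = set (rows T)"

definition Pi_dec :: "dtable \<Rightarrow> nat set" where
  "Pi_dec T = \<Inter> (snd ` set (rows T))"

definition W :: "dtable \<Rightarrow> nat" where
  "W T = length (atts T)"

definition col_val :: "nat list \<Rightarrow> nat list \<Rightarrow> nat \<Rightarrow> nat" where
  "col_val as r a = the (map_of (zip as r) a)"

definition Omega :: "nat \<Rightarrow> dtable \<Rightarrow> (nat \<times> nat) list set" where
  "Omega k T = {\<alpha>. \<forall>(a, v) \<in> set \<alpha>. a \<in> set (atts T) \<and> v < k}"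

definition sub :: "dtable \<Rightarrow> (nat \<times> nat) list \<Rightarrow> dtable" where
  "sub T \<alpha> = (let rs = filter (\<lambda>(r, d). \<forall>(a, v) \<in> set \<alpha>. col_val (atts T) r a = v) (rows T)
              in if rs = [] then Lam else \<lparr>atts = atts T, rows = rs\<rparr>)"

fun dedup_first :: "('a \<times> 'b) list \<Rightarrow> ('a \<times> 'b) list" where
  "dedup_first [] = []"
| "dedup_first (x # xs) = x # dedup_first (filter (\<lambda>y. fst y \<noteq> fst x) xs)"

definition proj :: "nat list \<Rightarrow> nat set \<Rightarrow> nat list \<Rightarrow> nat list" where
  "proj as D r = map snd (filter (\<lambda>(a, v). a \<notin> D) (zip as r))"

definition I_op :: "nat set \<Rightarrow> dtable \<Rightarrow> dtable" where
  "I_op D T = (let as' = filter (\<lambda>a. a \<notin> D) (atts T) in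
     if as' = [] then Lam
     else \<lparr>atts = as', rows = dedup_first (map (\<lambda>(r, d). (proj (atts T) D r, d)) (rows T))\<rparr>)"

text \<open>nu : E_k^m \<rightarrow> P(omega) (values outside E_k^m are irrelevant).\<close>
definition valid_map :: "nat \<Rightarrow> nat \<Rightarrow> (nat list \<Rightarrow> nat set) \<Rightarrow> bool" where
  "valid_map k m \<nu> \<longleftrightarrow>
     (\<forall>\<delta>. length \<delta> = m \<and> (\<forall>v\<in>set \<delta>. v < k) \<longrightarrow> finite (\<nu> \<delta>) \<and> \<nu> \<delta> \<noteq> {})"

definition J_op :: "(nat list \<Rightarrow> nat set) \<Rightarrow> dtable \<Rightarrow> dtable" where
  "J_op \<nu> T = \<lparr>atts = atts T, rows = map (\<lambda>(r, d). (r, \<nu> r)) (rows T)\<rparr>"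

definition closure1 :: "nat \<Rightarrow> dtable \<Rightarrow> dtable set" where
  "closure1 k T = {J_op \<nu> (I_op D T) | D \<nu>.
      D \<subseteq> set (atts T) \<and> valid_map k (card (set (atts T) - D)) \<nu>}"

definition closed_class :: "nat \<Rightarrow> dtable set \<Rightarrow> bool" where
  "closed_class k A \<longleftrightarrow> A \<noteq> {} \<and> A \<subseteq> {T. valid_table k T} \<and> (\<Union>T\<in>A. closure1 k T) = A"

definition nontrivial :: "dtable set \<Rightarrow> bool" where
  "nontrivial A \<longleftrightarrow> (\<exists>T\<in>A. rows T \<noteq> [])"

text \<open>A k-decision tree is the
(nonempty) list of subtrees hanging from the unlabeled root.\<close>
datatype dtree = Leaf nat | Node nat "(nat \<times> dtree) list"

fun wf_dt :: "nat \<Rightarrow> dtree \<Rightarrow> bool" where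
  "wf_dt k (Leaf d) = True"
| "wf_dt k (Node a es) = (es \<noteq> [] \<and> (\<forall>e\<in>set es. fst e < k \<and> wf_dt k (snd e)))"

fun det_dt :: "dtree \<Rightarrow> bool" where
  "det_dt (Leaf d) = True"
| "det_dt (Node a es) = (distinct (map fst es) \<and> (\<forall>e\<in>set es. det_dt (snd e)))"

fun atts_dt :: "dtree \<Rightarrow> nat set" where
  "atts_dt (Leaf d) = {}"
| "atts_dt (Node a es) = insert a (\<Union>e\<in>set es. atts_dt (snd e))"

fun paths :: "dtree \<Rightarrow> ((nat \<times> nat) list \<times> nat) set" where
  "paths (Leaf d) = {([], d)}"
| "paths (Node a es) = (\<Union>e\<in>set es. (\<lambda>(p, d). ((a, fst e) # p, d)) ` paths (snd e))"

definition ktree :: "nat \<Rightarrow> dtree list \<Rightarrow> bool" where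
  "ktree k \<Gamma> \<longleftrightarrow> \<Gamma> \<noteq> [] \<and> (\<forall>t\<in>set \<Gamma>. wf_dt k t)"

definition At_tree :: "dtree list \<Rightarrow> nat set" where
  "At_tree \<Gamma> = (\<Union>t\<in>set \<Gamma>. atts_dt t)"

definition cpaths :: "dtree list \<Rightarrow> ((nat \<times> nat) list \<times> nat) set" where
  "cpaths \<Gamma> = (\<Union>t\<in>set \<Gamma>. paths t)"

definition nondet_tree :: "nat \<Rightarrow> dtable \<Rightarrow> dtree list \<Rightarrow> bool" where
  "nondet_tree k T \<Gamma> \<longleftrightarrow> ktree k \<Gamma> \<and> At_tree \<Gamma> \<subseteq> set (atts T) \<and>
     (\<forall>r\<in>Delta T. \<exists>(p, d)\<in>cpaths \<Gamma>. r \<in> Delta (sub T p)) \<and>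
     (\<forall>(p, d)\<in>cpaths \<Gamma>. sub T p = Lam \<or> d \<in> Pi_dec (sub T p))"

definition det_tree :: "nat \<Rightarrow> dtable \<Rightarrow> dtree list \<Rightarrow> bool" where
  "det_tree k T \<Gamma> \<longleftrightarrow> nondet_tree k T \<Gamma> \<and> length \<Gamma> = 1 \<and> (\<forall>t\<in>set \<Gamma>. det_dt t)"

definition partially_bounded_cm :: "(nat list \<Rightarrow> nat) \<Rightarrow> bool" where
  "partially_bounded_cm \<psi> \<longleftrightarrow>
     (\<forall>\<alpha>. \<psi> \<alpha> = 0 \<longleftrightarrow> \<alpha> = []) \<and>
     (\<forall>\<alpha> \<beta>. mset \<alpha> = mset \<beta> \<longrightarrow> \<psi> \<alpha> = \<psi> \<beta>) \<and>
     (\<forall>\<alpha> \<beta>. \<psi> \<alpha> \<le> \<psi> (\<alpha> @ \<beta>)) \<and>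
     (\<forall>\<alpha> \<beta>. \<psi> (\<alpha> @ \<beta>) \<le> \<psi> \<alpha> + \<psi> \<beta>)"

definition bounded_cm :: "(nat list \<Rightarrow> nat) \<Rightarrow> bool" where
  "bounded_cm \<psi> \<longleftrightarrow> partially_bounded_cm \<psi> \<and> (\<forall>\<alpha>. length \<alpha> \<le> \<psi> \<alpha>)"

definition psi_word :: "(nat list \<Rightarrow> nat) \<Rightarrow> (nat \<times> nat) list \<Rightarrow> nat" where
  "psi_word \<psi> \<alpha> = \<psi> (map fst \<alpha>)"

definition psi_tree :: "(nat list \<Rightarrow> nat) \<Rightarrow> dtree list \<Rightarrow> nat" where
  "psi_tree \<psi> \<Gamma> = Max ((\<lambda>(p, d). psi_word \<psi> p) ` cpaths \<Gamma>)"

definition psi_d :: "(nat list \<Rightarrow> nat) \<Rightarrow> nat \<Rightarrow> dtable \<Rightarrow> nat" where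
  "psi_d \<psi> k T = (if T = Lam then 0 else LEAST m. \<exists>\<Gamma>. det_tree k T \<Gamma> \<and> psi_tree \<psi> \<Gamma> = m)"

definition psi_a :: "(nat list \<Rightarrow> nat) \<Rightarrow> nat \<Rightarrow> dtable \<Rightarrow> nat" where
  "psi_a \<psi> k T = (if T = Lam then 0 else LEAST m. \<exists>\<Gamma>. nondet_tree k T \<Gamma> \<and> psi_tree \<psi> \<Gamma> = m)"

definition is_cover :: "(nat list \<Rightarrow> nat) \<Rightarrow> nat \<Rightarrow> nat \<Rightarrow> dtable \<Rightarrow> (nat \<times> nat) list set \<Rightarrow> bool" where
  "is_cover \<psi> k n T U \<longleftrightarrow> finite U \<and> U \<subseteq> {\<alpha> \<in> Omega k T. psi_word \<psi> \<alpha> \<le> n} \<and>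
     (\<Union>\<alpha>\<in>U. Delta (sub T \<alpha>)) = Delta T"

definition irreducible_cover :: "(nat list \<Rightarrow> nat) \<Rightarrow> nat \<Rightarrow> nat \<Rightarrow> dtable \<Rightarrow> (nat \<times> nat) list set \<Rightarrow> bool" where
  "irreducible_cover \<psi> k n T U \<longleftrightarrow> is_cover \<psi> k n T U \<and> (\<forall>V. V \<subset> U \<longrightarrow> \<not> is_cover \<psi> k n T V)"

definition l_psi :: "(nat list \<Rightarrow> nat) \<Rightarrow> nat \<Rightarrow> dtable \<Rightarrow> nat \<Rightarrow> nat" where
  "l_psi \<psi> k T n = (if T = Lam then 0 else Max (card ` {U. irreducible_cover \<psi> k n T U}))"

end

theory Submission
  imports Defs
begin

lemma paths_finite: "finite (paths t)"
  by (induction t) (auto simp: snds.simps)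

lemma paths_nonempty: "wf_dt k t \<Longrightarrow> paths t \<noteq> {}"
proof (induction t)
  case (Leaf x) then show ?case by simp
next
  case (Node a es)
  then obtain e where e: "e \<in> set es" by (cases es) auto
  then have "paths (snd e) \<noteq> {}" using Node by (auto simp: snds.simps)
  then show ?case using e by auto
qed

lemma paths_card:
  "k \<ge> 1 \<Longrightarrow> wf_dt k t \<Longrightarrow> det_dt t \<Longrightarrow> (\<forall>(p, d)\<in>paths t. length p \<le> h) \<Longrightarrow> card (paths t) \<le> k ^ h"
proof (induction t arbitrary: h)
  case (Leaf x) then show ?case by simp
next
  case (Node a es)
  have IH: "\<And>e h. e \<in> set es \<Longrightarrow> (\<forall>(p, d)\<in>paths (snd e). length p \<le> h) \<Longrightarrow> card (paths (snd e)) \<le> k ^ h"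
    using Node by (auto simp: snds.simps)
  from Node.prems(2) obtain pd where pd: "pd \<in> paths (Node a es)" using paths_nonempty by blast
  then obtain e p d where "e\<in>set es" "(p,d)\<in>paths (snd e)" "pd = ((a,fst e)#p,d)" by auto
  then have "length ((a,fst e)#p) \<le> h" using Node.prems(4) pd by fastforce
  then have h1: "h \<ge> 1" by simp
  have sub: "\<And>e. e \<in> set es \<Longrightarrow> card (paths (snd e)) \<le> k ^ (h - 1)"
  proof -
    fix e assume e: "e \<in> set es"
    show "card (paths (snd e)) \<le> k ^ (h - 1)"
    proof (rule IH[OF e], safe)
      fix p d assume "(p, d) \<in> paths (snd e)"
      then have "((a, fst e) # p, d) \<in> paths (Node a es)" using e by force
      then show "length p \<le> h - 1" using Node.prems(4) by fastforce
    qed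
  qed
  have inj: "inj_on fst (set es)" using Node.prems(3) by (simp add: distinct_map)
  have "fst ` set es \<subseteq> {..<k}" using Node.prems(2) by auto
  then have "card (fst ` set es) \<le> k" by (metis card_lessThan card_mono finite_lessThan)
  then have ces: "card (set es) \<le> k" using card_image[OF inj] by simp
  have "card (paths (Node a es)) \<le> (\<Sum>e\<in>set es. card ((\<lambda>(p, d). ((a, fst e) # p, d)) ` paths (snd e)))"
    by (simp add: card_UN_le)
  also have "\<dots> \<le> (\<Sum>e\<in>set es. card (paths (snd e)))"
    by (intro sum_mono card_image_le paths_finite)
  also have "\<dots> \<le> (\<Sum>e\<in>set es. k ^ (h - 1))"
    by (intro sum_mono sub)
  also have "\<dots> = card (set es) * k ^ (h - 1)" by simp
  also have "\<dots> \<le> k * k ^ (h - 1)" using ces by simp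
  also have "\<dots> = k ^ h" using h1 by (metis Suc_diff_le diff_Suc_1 power_Suc)
  finally show ?case .
qed

fun chain :: "(nat \<times> nat) list \<Rightarrow> nat \<Rightarrow> dtree" where
  "chain [] i = Leaf i"
| "chain ((a, v) # \<alpha>) i = Node a [(v, chain \<alpha> i)]"

lemma chain_paths: "paths (chain \<alpha> i) = {(\<alpha>, i)}"
  by (induction \<alpha> i rule: chain.induct) auto

lemma chain_wf: "\<forall>x\<in>set \<alpha>. snd x < k \<Longrightarrow> wf_dt k (chain \<alpha> i)"
  by (induction \<alpha> i rule: chain.induct) auto

lemma chain_atts: "atts_dt (chain \<alpha> i) = fst ` set \<alpha>"
  by (induction \<alpha> i rule: chain.induct) auto

fun fullt :: "nat \<Rightarrow> ((nat \<times> nat) list \<Rightarrow> nat) \<Rightarrow> nat list \<Rightarrow> (nat \<times> nat) list \<Rightarrow> dtree" where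
  "fullt k c [] pre = Leaf (c pre)"
| "fullt k c (a # as) pre = Node a (map (\<lambda>v. (v, fullt k c as (pre @ [(a, v)]))) [0..<k])"

lemma fullt_wf: "k \<ge> 1 \<Longrightarrow> wf_dt k (fullt k c as pre)"
  by (induction as arbitrary: pre) auto

lemma fullt_det: "det_dt (fullt k c as pre)"
  by (induction as arbitrary: pre) (auto simp: comp_def)

lemma fullt_atts: "atts_dt (fullt k c as pre) \<subseteq> set as"
  by (induction as arbitrary: pre) auto

lemma fullt_paths: "(p, d) \<in> paths (fullt k c as pre) \<Longrightarrow>
   map fst p = as \<and> (\<forall>x\<in>set p. snd x < k) \<and> d = c (pre @ p)"
proof (induction as arbitrary: pre p d)
  case Nil then show ?case by simp
next
  case (Cons a as)
  then obtain v p' where "v < k" "p = (a, v) # p'" "(p', d) \<in> paths (fullt k c as (pre @ [(a, v)]))"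
    by auto
  then show ?case using Cons.IH by fastforce
qed

lemma fullt_complete: "length vs = length as \<Longrightarrow> \<forall>v\<in>set vs. v < k \<Longrightarrow>
   (zip as vs, c (pre @ zip as vs)) \<in> paths (fullt k c as pre)"
proof (induction as arbitrary: vs pre)
  case Nil then show ?case by simp
next
  case (Cons a as)
  then obtain v vs' where vs: "vs = v # vs'" by (cases vs) auto
  have "(zip as vs', c ((pre @ [(a, v)]) @ zip as vs')) \<in> paths (fullt k c as (pre @ [(a, v)]))"
    using Cons.IH[of vs' "pre @ [(a, v)]"] Cons.prems vs by auto
  then show ?case using vs Cons.prems by force
qed


definition mt :: "nat list \<Rightarrow> nat list \<Rightarrow> (nat \<times> nat) list \<Rightarrow> bool" where
  "mt as r \<alpha> \<longleftrightarrow> (\<forall>(a, v)\<in>set \<alpha>. col_val as r a = v)"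

lemma Delta_sub: "Delta (sub X \<alpha>) = {x \<in> Delta X. mt (atts X) (fst x) \<alpha>}"
  unfolding sub_def Let_def Delta_def Lam_def mt_def
  by (auto simp: filter_empty_conv split: prod.splits)

lemma Delta_Lam: "Delta Lam = {}" by (simp add: Delta_def Lam_def)

lemma Pi_dec_Delta: "Pi_dec X = \<Inter> (snd ` Delta X)"
  by (simp add: Pi_dec_def Delta_def)

lemma Delta_J: "Delta (J_op \<nu> X) = (\<lambda>(r, d). (r, \<nu> r)) ` Delta X"
  by (auto simp: Delta_def J_op_def)

lemma atts_J[simp]: "atts (J_op \<nu> X) = atts X"
  by (simp add: J_op_def)

lemma col_val_nth: "distinct as \<Longrightarrow> length r = length as \<Longrightarrow> j < length as \<Longrightarrow> col_val as r (as ! j) = r ! j"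
  unfolding col_val_def
  by (subst map_of_is_SomeI[where y="r ! j"]) (auto simp: set_zip)

lemma mt_zip: "distinct as \<Longrightarrow> length r = length as \<Longrightarrow> mt as r (zip as r)"
  unfolding mt_def by (auto simp: set_zip col_val_nth)

lemma mt_zip_eq: "distinct as \<Longrightarrow> length r = length as \<Longrightarrow> length vs = length as \<Longrightarrow>
   mt as r (zip as vs) \<Longrightarrow> r = vs"
  unfolding mt_def
  apply (rule nth_equalityI, simp)
proof -
  fix i assume H: "distinct as" "length r = length as" "length vs = length as"
    "\<forall>(a, v)\<in>set (zip as vs). col_val as r a = v" "i < length r"
  have "(as ! i, vs ! i) \<in> set (zip as vs)" using H by (auto simp: set_zip)
  then have "col_val as r (as ! i) = vs ! i" using H(4) by auto
  then show "r ! i = vs ! i" using col_val_nth[of as r i] H by simp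
qed


lemma log_bound: "(k::nat) \<ge> 2 \<Longrightarrow> m \<ge> 1 \<Longrightarrow> m \<le> k ^ h \<Longrightarrow> log (real k) (real m) \<le> real h"
proof -
  assume a: "k \<ge> 2" "m \<ge> 1" "m \<le> k ^ h"
  have "real m \<le> real k ^ h" using a(3) by (metis of_nat_le_iff of_nat_power)
  then have "log (real k) (real m) \<le> log (real k) (real k ^ h)"
    using a by (subst log_le_cancel_iff) auto
  also have "\<dots> = real h" using a by (simp add: log_nat_power)
  finally show ?thesis .
qed

theorem lemma4:
  fixes k n :: nat and A :: "dtable set" and \<psi> :: "nat list \<Rightarrow> nat" and T :: dtable
  assumes "k \<ge> 2"
    and "closed_class k A" and "nontrivial A"
    and "bounded_cm \<psi>"
    and "T \<in> A"
    and "l_psi \<psi> k T n > 0"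
  shows "\<exists>\<nu>. valid_map k (W T) \<nu> \<and>
           psi_a \<psi> k (J_op \<nu> T) \<le> n \<and>
           real (psi_d \<psi> k (J_op \<nu> T)) \<ge> log (real k) (real (l_psi \<psi> k T n))"
proof -
  have k2: "k \<ge> 2" by fact
  have valid: "valid_table k T" using assms(2,5) unfolding closed_class_def by auto
  have TnL: "T \<noteq> Lam" using assms(6) unfolding l_psi_def by auto
  define as where "as = atts T"
  have rowsne: "rows T \<noteq> []"
  proof
    assume "rows T = []"
    then have "atts T = []" using valid unfolding valid_table_def by auto
    then have "T = Lam" using \<open>rows T = []\<close> unfolding Lam_def by (simp add: dtable.equality)
    then show False using TnL by simp
  qed
  have asne: "as \<noteq> []" using rowsne valid unfolding valid_table_def as_def by auto
  have dist: "distinct as" using valid unfolding valid_table_def as_def by auto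
  have rowlen: "\<And>r d. (r, d) \<in> Delta T \<Longrightarrow> length r = length as \<and> (\<forall>v\<in>set r. v < k)"
    using valid unfolding valid_table_def as_def Delta_def by auto
  have DTne: "Delta T \<noteq> {}" using rowsne by (simp add: Delta_def)
  have pb: "partially_bounded_cm \<psi>" and psilen: "\<And>\<alpha>. length \<alpha> \<le> \<psi> \<alpha>"
    using assms(4) unfolding bounded_cm_def by blast+
  have "\<forall>\<alpha>. (\<psi> \<alpha> = 0) = (\<alpha> = [])" using pb unfolding partially_bounded_cm_def by (rule conjunct1)
  then have "(\<psi> [] = 0) = ([] = ([]::nat list))" by (rule spec)
  then have psi0: "\<psi> [] = 0" by simp
  define S where "S = {\<alpha> \<in> Omega k T. psi_word \<psi> \<alpha> \<le> n}"
  have "S \<subseteq> {xs. set xs \<subseteq> set as \<times> {..<k} \<and> length xs \<le> n}"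
  proof
    fix \<alpha> assume "\<alpha> \<in> S"
    then have "\<forall>(a, v)\<in>set \<alpha>. a \<in> set as \<and> v < k" "length (map fst \<alpha>) \<le> n"
      using psilen[of "map fst \<alpha>"] unfolding S_def Omega_def psi_word_def as_def by auto
    then show "\<alpha> \<in> {xs. set xs \<subseteq> set as \<times> {..<k} \<and> length xs \<le> n}" by auto
  qed
  then have finS: "finite S" by (rule finite_subset) (intro finite_lists_length_le; simp)
  define C where "C = {U. irreducible_cover \<psi> k n T U}"
  have "C \<subseteq> Pow S" unfolding C_def irreducible_cover_def is_cover_def S_def by auto
  then have finC: "finite C" using finS by (meson finite_Pow_iff finite_subset)
  have sub0: "sub T [] = T"
    using rowsne unfolding sub_def Let_def by (simp add: dtable.equality)
  have "{[]} \<in> C"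
    unfolding C_def irreducible_cover_def is_cover_def
    using DTne psi0 sub0 by (auto simp: Omega_def psi_word_def)
  then have Cne: "C \<noteq> {}" by auto
  have lval: "l_psi \<psi> k T n = Max (card ` C)" using TnL unfolding l_psi_def C_def by simp
  obtain U where UC: "U \<in> C" and cardU: "card U = l_psi \<psi> k T n"
  proof -
    have "Max (card ` C) \<in> card ` C" using finC Cne by (intro Max_in) auto
    then show ?thesis using that lval by auto
  qed
  have Ucov: "is_cover \<psi> k n T U" and Uirr: "\<And>V. V \<subset> U \<Longrightarrow> \<not> is_cover \<psi> k n T V"
    using UC unfolding C_def irreducible_cover_def by auto
  have finU: "finite U" and US: "U \<subseteq> S" and Ucover: "(\<Union>\<alpha>\<in>U. Delta (sub T \<alpha>)) = Delta T"
    using Ucov unfolding is_cover_def S_def by auto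
  obtain us where us: "set us = U" "distinct us" using finite_distinct_list[OF finU] by auto
  define m where "m = length us"
  have m_eq: "m = l_psi \<psi> k T n" using us cardU distinct_card m_def by metis
  have mpos: "m > 0" using m_eq assms(6) by simp
  have usS: "\<And>i. i < m \<Longrightarrow> us ! i \<in> S" using us US m_def by auto
  have usO: "\<And>i. i < m \<Longrightarrow> us ! i \<in> Omega k T" and uspsi: "\<And>i. i < m \<Longrightarrow> psi_word \<psi> (us ! i) \<le> n"
    using usS unfolding S_def by auto
  have mtD: "\<And>\<alpha>. Delta (sub T \<alpha>) = {x \<in> Delta T. mt as (fst x) \<alpha>}"
    using Delta_sub as_def by simp
  have witness: "\<And>i. i < m \<Longrightarrow> \<exists>x\<in>Delta T. mt as (fst x) (us ! i) \<and> (\<forall>j<m. j \<noteq> i \<longrightarrow> \<not> mt as (fst x) (us ! j))"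
  proof -
    fix i assume i: "i < m"
    define V where "V = U - {us ! i}"
    have ui: "us ! i \<in> U" using i us(1) m_def by auto
    then have "V \<subset> U" unfolding V_def by blast
    then have nc: "\<not> is_cover \<psi> k n T V" by (rule Uirr)
    have "finite V" "V \<subseteq> {\<alpha> \<in> Omega k T. psi_word \<psi> \<alpha> \<le> n}" using finU US unfolding V_def S_def by auto
    then have "(\<Union>\<alpha>\<in>V. Delta (sub T \<alpha>)) \<noteq> Delta T" using nc unfolding is_cover_def by blast
    moreover have "(\<Union>\<alpha>\<in>V. Delta (sub T \<alpha>)) \<subseteq> Delta T" unfolding mtD by blast
    ultimately obtain x where x: "x \<in> Delta T" "\<forall>\<alpha>\<in>V. x \<notin> Delta (sub T \<alpha>)" by blast
    then obtain \<alpha> where al: "\<alpha> \<in> U" "x \<in> Delta (sub T \<alpha>)" using Ucover by blast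
    then have "\<alpha> = us ! i" using x(2) unfolding V_def by blast
    then have m1: "mt as (fst x) (us ! i)" using al(2) unfolding mtD by blast
    have "\<forall>j<m. j \<noteq> i \<longrightarrow> \<not> mt as (fst x) (us ! j)"
    proof (intro allI impI)
      fix j assume j: "j < m" "j \<noteq> i"
      have "us ! j \<noteq> us ! i" using j i us(2) m_def by (simp add: nth_eq_iff_index_eq)
      moreover have "us ! j \<in> U" using j us(1) m_def by auto
      ultimately have "us ! j \<in> V" unfolding V_def by blast
      then show "\<not> mt as (fst x) (us ! j)" using x unfolding mtD by blast
    qed
    then show "\<exists>x\<in>Delta T. mt as (fst x) (us ! i) \<and> (\<forall>j<m. j \<noteq> i \<longrightarrow> \<not> mt as (fst x) (us ! j))"
      using x m1 by blast
  qed
  define \<nu> where "\<nu> = (\<lambda>r. if \<exists>i<m. mt as r (us ! i) then {i. i < m \<and> mt as r (us ! i)} else {0::nat})"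
  have \<nu>ne: "\<And>r. \<nu> r \<noteq> {}" and \<nu>fin: "\<And>r. finite (\<nu> r)" unfolding \<nu>_def by auto
  have \<nu>mem: "\<And>r i. i < m \<Longrightarrow> mt as r (us ! i) \<Longrightarrow> i \<in> \<nu> r" unfolding \<nu>_def by auto
  have vm: "valid_map k (W T) \<nu>" unfolding valid_map_def using \<nu>ne \<nu>fin by auto
  define Ts where "Ts = J_op \<nu> T"
  have Tsatts: "atts Ts = as" unfolding Ts_def as_def by simp
  have TsnL: "Ts \<noteq> Lam" using Tsatts asne unfolding Lam_def by auto
  have DTs: "Delta Ts = (\<lambda>(r, d). (r, \<nu> r)) ` Delta T" unfolding Ts_def by (rule Delta_J)
  have DsubTs: "\<And>\<alpha>. Delta (sub Ts \<alpha>) = {x \<in> Delta Ts. mt as (fst x) \<alpha>}"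
    using Delta_sub Tsatts by simp
  define \<Gamma>a where "\<Gamma>a = map (\<lambda>i. chain (us ! i) i) [0..<m]"
  have cpa: "cpaths \<Gamma>a = (\<lambda>i. (us ! i, i)) ` {..<m}"
    unfolding cpaths_def \<Gamma>a_def by (auto simp: chain_paths)
  have nda: "nondet_tree k Ts \<Gamma>a"
    unfolding nondet_tree_def
  proof (intro conjI)
    have usk: "\<And>i x. i < m \<Longrightarrow> x \<in> set (us ! i) \<Longrightarrow> snd x < k"
      using usO unfolding Omega_def by fastforce
    have usa: "\<And>i x. i < m \<Longrightarrow> x \<in> set (us ! i) \<Longrightarrow> fst x \<in> set as"
      using usO unfolding Omega_def as_def by fastforce
    show "ktree k \<Gamma>a" unfolding ktree_def \<Gamma>a_def using mpos usk
      by (auto intro!: chain_wf)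
    show "At_tree \<Gamma>a \<subseteq> set (atts Ts)" unfolding At_tree_def \<Gamma>a_def Tsatts using usa
      by (auto simp: chain_atts)
    show "\<forall>r\<in>Delta Ts. \<exists>(p, d)\<in>cpaths \<Gamma>a. r \<in> Delta (sub Ts p)"
    proof
      fix x assume x: "x \<in> Delta Ts"
      then obtain r d where rd: "(r, d) \<in> Delta T" "x = (r, \<nu> r)" using DTs by auto
      then obtain \<alpha> where "\<alpha> \<in> U" "(r, d) \<in> Delta (sub T \<alpha>)" using Ucover by blast
      then obtain i where i: "i < m" "\<alpha> = us ! i" "mt as r (us ! i)"
        using us mtD m_def by (auto simp: in_set_conv_nth)
      have "x \<in> Delta (sub Ts (us ! i))" using DsubTs x rd i by auto
      then show "\<exists>(p, d)\<in>cpaths \<Gamma>a. x \<in> Delta (sub Ts p)" using cpa i by auto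
    qed
    show "\<forall>(p, d)\<in>cpaths \<Gamma>a. sub Ts p = Lam \<or> d \<in> Pi_dec (sub Ts p)"
    proof
      fix pd assume "pd \<in> cpaths \<Gamma>a"
      then obtain i where i: "i < m" "pd = (us ! i, i)" using cpa by auto
      have "i \<in> Pi_dec (sub Ts (us ! i))"
        unfolding Pi_dec_Delta using DsubTs DTs \<nu>mem[OF i(1)] by auto
      then show "case pd of (p, d) \<Rightarrow> sub Ts p = Lam \<or> d \<in> Pi_dec (sub Ts p)" using i by simp
    qed
  qed
  have "psi_tree \<psi> \<Gamma>a \<le> n"
    unfolding psi_tree_def cpa using mpos uspsi by (intro Max.boundedI) auto
  then have psia: "psi_a \<psi> k Ts \<le> n"
    unfolding psi_a_def using TsnL nda by (auto intro: Least_le[THEN order.trans])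
  define c where "c = (\<lambda>p. SOME d. d \<in> Pi_dec (sub Ts p))"
  define \<Gamma>d where "\<Gamma>d = [fullt k c as []]"
  have dtd: "det_tree k Ts \<Gamma>d"
    unfolding det_tree_def nondet_tree_def
  proof (intro conjI)
    show "ktree k \<Gamma>d" unfolding ktree_def \<Gamma>d_def using k2 by (auto intro: fullt_wf)
    show "At_tree \<Gamma>d \<subseteq> set (atts Ts)" unfolding At_tree_def \<Gamma>d_def Tsatts using fullt_atts by auto
    show "length \<Gamma>d = 1" "\<forall>t\<in>set \<Gamma>d. det_dt t" unfolding \<Gamma>d_def by (auto simp: fullt_det)
    show "\<forall>r\<in>Delta Ts. \<exists>(p, d)\<in>cpaths \<Gamma>d. r \<in> Delta (sub Ts p)"
    proof
      fix x assume x: "x \<in> Delta Ts"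
      then obtain r d where rd: "(r, d) \<in> Delta T" "x = (r, \<nu> r)" using DTs by auto
      have "(zip as r, c ([] @ zip as r)) \<in> cpaths \<Gamma>d"
        unfolding cpaths_def \<Gamma>d_def using rowlen[OF rd(1)] fullt_complete[of r as k c "[]"] by auto
      moreover have "x \<in> Delta (sub Ts (zip as r))"
        using DsubTs x rd mt_zip[OF dist] rowlen[OF rd(1)] by auto
      ultimately show "\<exists>(p, d)\<in>cpaths \<Gamma>d. x \<in> Delta (sub Ts p)" by auto
    qed
    show "\<forall>(p, d)\<in>cpaths \<Gamma>d. sub Ts p = Lam \<or> d \<in> Pi_dec (sub Ts p)"
    proof
      fix pd' assume pd0: "pd' \<in> cpaths \<Gamma>d"
      obtain p d where pdeq: "pd' = (p, d)" by (cases pd')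
      have pd: "(p, d) \<in> paths (fullt k c as [])" using pd0 pdeq unfolding cpaths_def \<Gamma>d_def by simp
      then have pp: "map fst p = as" "d = c p" using fullt_paths[OF pd] by auto
      define vs where "vs = map snd p"
      have pz: "p = zip as vs" unfolding vs_def using pp by (metis zip_map_fst_snd)
      have lvs: "length vs = length as" unfolding vs_def using pp by (metis length_map)
      obtain d0 where d0: "d0 \<in> \<nu> vs" using \<nu>ne by blast
      have "d0 \<in> Pi_dec (sub Ts p)"
        unfolding Pi_dec_Delta
      proof (rule InterI)
        fix X assume "X \<in> snd ` Delta (sub Ts p)"
        then obtain y where y: "y \<in> Delta (sub Ts p)" "X = snd y" by auto
        then obtain r dd where rd: "(r, dd) \<in> Delta T" "y = (r, \<nu> r)" "mt as r p"
          using DsubTs DTs by auto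
        then have "r = vs" using mt_zip_eq[OF dist _ lvs] rowlen[OF rd(1)] pz by auto
        then show "d0 \<in> X" using y rd d0 by simp
      qed
      then have "d \<in> Pi_dec (sub Ts p)" unfolding pp(2) c_def by (rule someI)
      then show "case pd' of (p, d) \<Rightarrow> sub Ts p = Lam \<or> d \<in> Pi_dec (sub Ts p)" using pdeq by simp
    qed
  qed
  have lb: "log (real k) (real m) \<le> real (psi_tree \<psi> \<Gamma>)" if dt: "det_tree k Ts \<Gamma>" for \<Gamma>
  proof -
    obtain t where t: "\<Gamma> = [t]" using dt unfolding det_tree_def by (auto simp: length_Suc_conv)
    have wft: "wf_dt k t" and dett: "det_dt t" and nd: "nondet_tree k Ts \<Gamma>"
      using dt t unfolding det_tree_def nondet_tree_def ktree_def by auto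
    have cp: "cpaths \<Gamma> = paths t" unfolding cpaths_def t by simp
    have sub1: "{..<m} \<subseteq> snd ` cpaths \<Gamma>"
    proof
      fix i assume "i \<in> {..<m}"
      then have i: "i < m" by simp
      obtain x where x: "x \<in> Delta T" "mt as (fst x) (us ! i)" "\<forall>j<m. j \<noteq> i \<longrightarrow> \<not> mt as (fst x) (us ! j)"
        using witness[OF i] by blast
      obtain r dd where xr: "x = (r, dd)" by (cases x)
      have nur: "\<nu> r = {i}" unfolding \<nu>_def using x xr i by auto
      have "(r, \<nu> r) \<in> Delta Ts" using DTs x xr by force
      then obtain p d where pd: "(p, d) \<in> cpaths \<Gamma>" "(r, \<nu> r) \<in> Delta (sub Ts p)"
        using nd unfolding nondet_tree_def by blast
      then have "sub Ts p \<noteq> Lam" using Delta_Lam by auto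
      then have "d \<in> Pi_dec (sub Ts p)" using nd pd unfolding nondet_tree_def by blast
      then have "d \<in> \<nu> r" using pd(2) unfolding Pi_dec_Delta by force
      then have "d = i" using nur by simp
      then show "i \<in> snd ` cpaths \<Gamma>" using pd by force
    qed
    define h where "h = psi_tree \<psi> \<Gamma>"
    have fincp: "finite (cpaths \<Gamma>)" using cp paths_finite by simp
    have "\<forall>(p, d)\<in>paths t. length p \<le> h"
    proof clarify
      fix p d assume "(p, d) \<in> paths t"
      then have "psi_word \<psi> p \<le> h" unfolding h_def psi_tree_def cp
        using paths_finite by (intro Max_ge) force+
      then show "length p \<le> h" using psilen[of "map fst p"] unfolding psi_word_def by simp
    qed
    then have "card (paths t) \<le> k ^ h" using paths_card[OF _ wft dett] k2 by simp
    moreover have "m \<le> card (cpaths \<Gamma>)"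
      using card_mono[OF finite_imageI[OF fincp] sub1] card_image_le[OF fincp, of snd] by simp
    ultimately have "m \<le> k ^ h" using cp by simp
    then show ?thesis unfolding h_def using log_bound[OF k2] mpos by simp
  qed
  have "\<exists>m \<Gamma>. det_tree k Ts \<Gamma> \<and> psi_tree \<psi> \<Gamma> = m" using dtd by blast
  then have "\<exists>\<Gamma>. det_tree k Ts \<Gamma> \<and> psi_tree \<psi> \<Gamma> = (LEAST m. \<exists>\<Gamma>. det_tree k Ts \<Gamma> \<and> psi_tree \<psi> \<Gamma> = m)"
    by (rule LeastI_ex)
  then have "\<exists>\<Gamma>. det_tree k Ts \<Gamma> \<and> psi_tree \<psi> \<Gamma> = psi_d \<psi> k Ts"
    unfolding psi_d_def using TsnL by simp
  then have "log (real k) (real m) \<le> real (psi_d \<psi> k Ts)" using lb by metis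
  then show ?thesis using vm psia m_eq unfolding Ts_def by auto
qed

end
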